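(* Let $\theta\in\mathbb R$. Let $h:[0,1]\to[0,1]$ be Lipschitz with $\min(\alpha,\beta)\le h\le\max(\alpha,\beta)$ and let $\nu^N_h$ be the Bernoulli product measure on $\Omega_N$ with $\nu^N_h(\eta_x=1)=h(\frac xN)$. There exists $C>0$, independent of $f$ and $N$, such that for every density $f$ with respect to $\nu^N_h$, $$\int (L_N^\ell\sqrt f)\sqrt f\,d\nu^N_h\le-\frac14D_N^\ell(\sqrt f,\nu^N_h)+\frac{C\kappa}{N^\theta}\sum_{x\in\Lambda_N}r_N^-(\tfrac xN)\big(h(\tfrac xN)-\alpha\big)^2,$$ $$\int (L_N^r\sqrt f)\sqrt f\,d\nu^N_h\le-\frac14D_N^r(\sqrt f,\nu^N_h)+\frac{C\kappa}{N^\theta}\sum_{x\in\Lambda_N}r_N^+(\tfrac xN)\big(h(\tfrac xN)-\beta\big)^2.$$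
   Context: $p:\mathbb Z\to[0,1]$ is a symmetric transition probability with finite variance; $\alpha,\beta\in(0,1)$, $\kappa>0$. $\Lambda_N=\{1,\dots,N-1\}$, $\Omega_N=\{0,1\}^{\Lambda_N}$; $\sigma^x\eta$ flips the value at $x$; $c_x(\eta;a)=\eta_x(1-a)+(1-\eta_x)a$. $(L_N^\ell f)(\eta)=\frac{\kappa}{N^\theta}\sum_{x\in\Lambda_N,y\le0}p(x-y)c_x(\eta;\alpha)[f(\sigma^x\eta)-f(\eta)]$, $(L_N^rf)(\eta)=\frac{\kappa}{N^\theta}\sum_{x\in\Lambda_N,y\ge N}p(x-y)c_x(\eta;\beta)[f(\sigma^x\eta)-f(\eta)]$. $r_N^-(\frac xN)=\sum_{y\ge x}p(y)$, $r_N^+(\frac xN)=\sum_{y\le x-N}p(y)$. For a probability $\mu$ and density $f$: $I^a_x(\sqrt f,\mu)=\int c_x(\eta;a)(\sqrt{f(\sigma^x\eta)}-\sqrt{f(\eta)})^2d\mu$, $D_N^\ell(\sqrt f,\mu)=\frac{\kappa}{N^\theta}\sum_{x\in\Lambda_N}r_N^-(\frac xN)I^\alpha_x(\sqrt f,\mu)$, $D_N^r(\sqrt f,\mu)=\frac{\kappa}{N^\theta}\sum_{x\in\Lambda_N}r_N^+(\frac xN)I^\beta_x(\sqrt f,\mu)$. A density w.r.t. $\nu$ is $f\ge0$ with $\int f d\nu=1$. *)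

theory Defs
  imports "HOL-Analysis.Analysis"
begin

definition sym_trans_prob :: "(int \<Rightarrow> real) \<Rightarrow> bool" where
  "sym_trans_prob p \<longleftrightarrow> (\<forall>z. 0 \<le> p z \<and> p z \<le> 1) \<and> (p has_sum 1) UNIV
     \<and> (\<forall>z. p (- z) = p z) \<and> (\<lambda>z. (real_of_int z)^2 * p z) summable_on UNIV"

definition Lam :: "nat \<Rightarrow> int set" where
  "Lam N = {1 .. int N - 1}"

text \<open>Omega_N = {0,1}^Lambda_N; a configuration is a boolean function on int vanishing off Lambda_N.\<close>
definition Omega :: "nat \<Rightarrow> (int \<Rightarrow> bool) set" where
  "Omega N = {\<eta>. \<forall>x. x \<notin> Lam N \<longrightarrow> \<not> \<eta> x}"

definition flip :: "int \<Rightarrow> (int \<Rightarrow> bool) \<Rightarrow> (int \<Rightarrow> bool)" where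
  "flip x \<eta> = \<eta>(x := \<not> \<eta> x)"

definition crate :: "int \<Rightarrow> (int \<Rightarrow> bool) \<Rightarrow> real \<Rightarrow> real" where
  "crate x \<eta> a = (if \<eta> x then 1 - a else a)"

definition L_left :: "(int \<Rightarrow> real) \<Rightarrow> real \<Rightarrow> real \<Rightarrow> real \<Rightarrow> nat
     \<Rightarrow> ((int \<Rightarrow> bool) \<Rightarrow> real) \<Rightarrow> (int \<Rightarrow> bool) \<Rightarrow> real" where
  "L_left p \<kappa> \<theta> \<alpha> N f \<eta> = \<kappa> / (real N powr \<theta>) *
     (\<Sum>x\<in>Lam N. \<Sum>\<^sub>\<infinity>y\<in>{..0}. p (x - y) * crate x \<eta> \<alpha> * (f (flip x \<eta>) - f \<eta>))"

definition L_right :: "(int \<Rightarrow> real) \<Rightarrow> real \<Rightarrow> real \<Rightarrow> real \<Rightarrow> nat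
     \<Rightarrow> ((int \<Rightarrow> bool) \<Rightarrow> real) \<Rightarrow> (int \<Rightarrow> bool) \<Rightarrow> real" where
  "L_right p \<kappa> \<theta> \<beta> N f \<eta> = \<kappa> / (real N powr \<theta>) *
     (\<Sum>x\<in>Lam N. \<Sum>\<^sub>\<infinity>y\<in>{int N..}. p (x - y) * crate x \<eta> \<beta> * (f (flip x \<eta>) - f \<eta>))"

text \<open>r_N^-(x/N) = sum_{y >= x} p(y),  r_N^+(x/N) = sum_{y <= x - N} p(y).\<close>
definition r_minus :: "(int \<Rightarrow> real) \<Rightarrow> nat \<Rightarrow> int \<Rightarrow> real" where
  "r_minus p N x = (\<Sum>\<^sub>\<infinity>y\<in>{x..}. p y)"

definition r_plus :: "(int \<Rightarrow> real) \<Rightarrow> nat \<Rightarrow> int \<Rightarrow> real" where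
  "r_plus p N x = (\<Sum>\<^sub>\<infinity>y\<in>{..x - int N}. p y)"

text \<open>Bernoulli product measure nu^N_h with nu(eta_x = 1) = h(x/N), as point masses on Omega_N.\<close>
definition nu :: "(real \<Rightarrow> real) \<Rightarrow> nat \<Rightarrow> (int \<Rightarrow> bool) \<Rightarrow> real" where
  "nu h N \<eta> = (\<Prod>x\<in>Lam N. if \<eta> x then h (real_of_int x / real N) else 1 - h (real_of_int x / real N))"

definition integ :: "(real \<Rightarrow> real) \<Rightarrow> nat \<Rightarrow> ((int \<Rightarrow> bool) \<Rightarrow> real) \<Rightarrow> real" where
  "integ h N g = (\<Sum>\<eta>\<in>Omega N. nu h N \<eta> * g \<eta>)"

definition is_density :: "(real \<Rightarrow> real) \<Rightarrow> nat \<Rightarrow> ((int \<Rightarrow> bool) \<Rightarrow> real) \<Rightarrow> bool" where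
  "is_density h N f \<longleftrightarrow> (\<forall>\<eta>\<in>Omega N. 0 \<le> f \<eta>) \<and> integ h N f = 1"

definition Ix :: "(real \<Rightarrow> real) \<Rightarrow> nat \<Rightarrow> real \<Rightarrow> int \<Rightarrow> ((int \<Rightarrow> bool) \<Rightarrow> real) \<Rightarrow> real" where
  "Ix h N a x g = integ h N (\<lambda>\<eta>. crate x \<eta> a * (g (flip x \<eta>) - g \<eta>)^2)"

definition D_left :: "(int \<Rightarrow> real) \<Rightarrow> real \<Rightarrow> real \<Rightarrow> real \<Rightarrow> (real \<Rightarrow> real) \<Rightarrow> nat
     \<Rightarrow> ((int \<Rightarrow> bool) \<Rightarrow> real) \<Rightarrow> real" where
  "D_left p \<kappa> \<theta> \<alpha> h N g = \<kappa> / (real N powr \<theta>) * (\<Sum>x\<in>Lam N. r_minus p N x * Ix h N \<alpha> x g)"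

definition D_right :: "(int \<Rightarrow> real) \<Rightarrow> real \<Rightarrow> real \<Rightarrow> real \<Rightarrow> (real \<Rightarrow> real) \<Rightarrow> nat
     \<Rightarrow> ((int \<Rightarrow> bool) \<Rightarrow> real) \<Rightarrow> real" where
  "D_right p \<kappa> \<theta> \<beta> h N g = \<kappa> / (real N powr \<theta>) * (\<Sum>x\<in>Lam N. r_plus p N x * Ix h N \<beta> x g)"

end

theory Submission
  imports Defs
begin

lemma core:
  fixes \<delta> \<rho> a g0 g1 :: real
  assumes "\<delta> > 0" "\<delta> \<le> \<rho>" "\<rho> \<le> 1 - \<delta>" "\<delta> \<le> a" "a \<le> 1 - \<delta>"
  shows "\<rho>*(1-a)*(g0-g1)*g1 + (1-\<rho>)*a*(g1-g0)*g0 \<le>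
    -(1/4)*(\<rho>*(1-a)*(g0-g1)^2 + (1-\<rho>)*a*(g1-g0)^2) + 1/(2*\<delta>^2)*(\<rho>-a)^2*(\<rho>*g1^2+(1-\<rho>)*g0^2)"
proof -
  define d :: real where "d = g1 - g0"
  define ww :: real where "ww = g1 + g0"
  define A :: real where "A = \<rho>*(1-a)"
  define B :: real where "B = (1-\<rho>)*a"
  have lhs: "\<rho>*(1-a)*(g0-g1)*g1 + (1-\<rho>)*a*(g1-g0)*g0 = -(A+B)/2*d^2 + (a-\<rho>)/2*d * ww"
    unfolding A_def B_def d_def ww_def by (simp add: field_simps power2_eq_square)
  have I: "\<rho>*(1-a)*(g0-g1)^2 + (1-\<rho>)*a*(g1-g0)^2 = (A+B)*d^2"
    unfolding A_def B_def d_def by (simp add: algebra_simps power2_eq_square)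
  have AB: "A + B \<ge> \<delta>"
  proof -
    have "A + B - \<delta> = \<rho>*((1-a)-\<delta>) + (1-\<rho>)*(a-\<delta>)" unfolding A_def B_def by (simp add: algebra_simps)
    also have "\<dots> \<ge> 0" using assms by (intro add_nonneg_nonneg mult_nonneg_nonneg) auto
    finally show ?thesis by simp
  qed
  have Q: "\<rho>*g1^2+(1-\<rho>)*g0^2 \<ge> \<delta>/2 * ww^2"
  proof -
    have "\<rho>*g1^2+(1-\<rho>)*g0^2 \<ge> \<delta>*g1^2 + \<delta>*g0^2"
      using assms by (intro add_mono mult_right_mono) auto
    moreover have "ww^2 \<le> 2*(g1^2+g0^2)" unfolding ww_def
      using sum_squares_ge_zero[of "g1-g0" 0] by (simp add: power2_eq_square algebra_simps)
    moreover have "\<delta>/2 * ww^2 \<le> \<delta>/2 * (2*(g1^2+g0^2))"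
      using calculation(2) assms(1) by (intro mult_left_mono) auto
    ultimately show ?thesis by (simp add: algebra_simps)
  qed
  have sq: "0 \<le> (\<delta>*d - (a-\<rho>) * ww)^2" by simp
  have key: "(a-\<rho>)/2*d * ww \<le> \<delta>/4*d^2 + (\<rho>-a)^2 * ww^2/(4*\<delta>)"
  proof -
    have e1: "(a-\<rho>)/2*d * ww * (4*\<delta>) = 2*\<delta>*(a-\<rho>)*d * ww" by (simp add: field_simps)
    have e2: "(\<delta>/4*d^2 + (\<rho>-a)^2 * ww^2/(4*\<delta>)) * (4*\<delta>) = \<delta>^2*d^2 + (\<rho>-a)^2 * ww^2"
      using assms(1) by (simp add: field_simps power2_eq_square)
    have e3: "\<delta>^2*d^2 + (\<rho>-a)^2 * ww^2 - 2*\<delta>*(a-\<rho>)*d * ww = (\<delta>*d - (a-\<rho>) * ww)^2"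
      by (simp add: power2_eq_square algebra_simps)
    have "(a-\<rho>)/2*d * ww * (4*\<delta>) \<le> (\<delta>/4*d^2 + (\<rho>-a)^2 * ww^2/(4*\<delta>)) * (4*\<delta>)"
      unfolding e1 e2 using sq e3 by linarith
    then show ?thesis using assms(1) by (meson mult_right_le_imp_le zero_less_mult_iff zero_less_numeral)
  qed
  have t1: "\<delta>/4*d^2 \<le> (1/4)*((A+B)*d^2)" using AB by (simp add: mult_right_mono)
  have t0: "-(A+B)/2*d^2 = -(1/2)*((A+B)*d^2)" by (simp add: field_simps)
  have t2: "(\<rho>-a)^2 * ww^2/(4*\<delta>) \<le> 1/(2*\<delta>^2)*(\<rho>-a)^2*(\<rho>*g1^2+(1-\<rho>)*g0^2)"
  proof -
    have "(\<rho>-a)^2 * ww^2/(4*\<delta>) = 1/(2*\<delta>^2)*(\<rho>-a)^2*(\<delta>/2 * ww^2)"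
      using assms(1) by (simp add: field_simps power2_eq_square)
    also have "\<dots> \<le> 1/(2*\<delta>^2)*(\<rho>-a)^2*(\<rho>*g1^2+(1-\<rho>)*g0^2)"
      using Q by (intro mult_left_mono) auto
    finally show ?thesis .
  qed
  show ?thesis unfolding lhs I t0 using key t1 t2 by linarith
qed
lemma flip_flip[simp]: "flip x (flip x \<eta>) = \<eta>"
  unfolding flip_def by auto

lemma flip_Omega: "x \<in> Lam N \<Longrightarrow> \<eta> \<in> Omega N \<Longrightarrow> flip x \<eta> \<in> Omega N"
  unfolding flip_def Omega_def by auto

lemma finite_Lam[simp]: "finite (Lam N)" unfolding Lam_def by simp

lemma nu_split:
  assumes "x \<in> Lam N"
  shows "nu h N \<eta> = (if \<eta> x then h (real_of_int x / real N) else 1 - h (real_of_int x / real N))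
     * (\<Prod>y\<in>Lam N - {x}. if \<eta> y then h (real_of_int y / real N) else 1 - h (real_of_int y / real N))"
  unfolding nu_def using assms by (simp add: prod.remove)

lemma P_flip:
  "(\<Prod>y\<in>Lam N - {x}. if flip x \<eta> y then h (real_of_int y / real N) else 1 - h (real_of_int y / real N))
   = (\<Prod>y\<in>Lam N - {x}. if \<eta> y then h (real_of_int y / real N) else 1 - h (real_of_int y / real N))"
  by (rule prod.cong) (auto simp: flip_def)

lemma site:
  fixes x :: int and a \<delta> :: real
  assumes x: "x \<in> Lam N" and fnn: "\<forall>\<eta>\<in>Omega N. 0 \<le> f \<eta>"
    and hr: "\<forall>y\<in>Lam N. 0 \<le> h (real_of_int y / real N) \<and> h (real_of_int y / real N) \<le> 1"
    and d: "\<delta> > 0" "\<delta> \<le> h (real_of_int x / real N)" "h (real_of_int x / real N) \<le> 1 - \<delta>" "\<delta> \<le> a" "a \<le> 1 - \<delta>"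
  shows "integ h N (\<lambda>\<eta>. crate x \<eta> a * (sqrt (f (flip x \<eta>)) - sqrt (f \<eta>)) * sqrt (f \<eta>))
    \<le> -(1/4) * Ix h N a x (\<lambda>\<zeta>. sqrt (f \<zeta>)) + 1/(2*\<delta>^2)*(h (real_of_int x / real N) - a)^2 * integ h N f"
proof -
  define g where "g = (\<lambda>\<zeta>. sqrt (f \<zeta>))"
  define \<rho> where "\<rho> = h (real_of_int x / real N)"
  define K where "K = 1/(2*\<delta>^2)*(\<rho> - a)^2"
  define P where "P = (\<lambda>\<eta>. \<Prod>y\<in>Lam N - {x}. if \<eta> y then h (real_of_int y / real N) else 1 - h (real_of_int y / real N))"
  define F where "F = (\<lambda>\<eta>. nu h N \<eta> * (crate x \<eta> a * (g (flip x \<eta>) - g \<eta>) * g \<eta>))"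
  define G where "G = (\<lambda>\<eta>. nu h N \<eta> * (-(1/4) * (crate x \<eta> a * (g (flip x \<eta>) - g \<eta>)^2) + K * f \<eta>))"
  have nuP: "nu h N \<eta> = (if \<eta> x then \<rho> else 1 - \<rho>) * P \<eta>" for \<eta>
    unfolding \<rho>_def P_def by (rule nu_split[OF x])
  have Pf: "P (flip x \<eta>) = P \<eta>" for \<eta> unfolding P_def by (rule P_flip)
  have P0: "P \<eta> \<ge> 0" for \<eta> unfolding P_def using hr by (intro prod_nonneg) auto
  have fx: "flip x \<eta> x = (\<not> \<eta> x)" for \<eta> unfolding flip_def by simp
  have fg: "f \<eta> = (g \<eta>)^2" if "\<eta> \<in> Omega N" for \<eta> unfolding g_def using fnn that by simp
  have pw: "F \<eta> + F (flip x \<eta>) \<le> G \<eta> + G (flip x \<eta>)" if \<eta>: "\<eta> \<in> Omega N" for \<eta>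
  proof -
    have \<eta>': "flip x \<eta> \<in> Omega N" using flip_Omega[OF x \<eta>] .
    show ?thesis
    proof (cases "\<eta> x")
      case True
      have c: "\<rho>*(1-a)*(g (flip x \<eta>)-g \<eta>)*g \<eta> + (1-\<rho>)*a*(g \<eta>-g (flip x \<eta>))*g (flip x \<eta>) \<le>
        -(1/4)*(\<rho>*(1-a)*(g (flip x \<eta>)-g \<eta>)^2 + (1-\<rho>)*a*(g \<eta>-g (flip x \<eta>))^2) + K*(\<rho>*(g \<eta>)^2+(1-\<rho>)*(g (flip x \<eta>))^2)"
        unfolding K_def using core[OF d(1) d(2)[folded \<rho>_def] d(3)[folded \<rho>_def] d(4) d(5)] .
      have "F \<eta> + F (flip x \<eta>) = P \<eta> * (\<rho>*(1-a)*(g (flip x \<eta>)-g \<eta>)*g \<eta> + (1-\<rho>)*a*(g \<eta>-g (flip x \<eta>))*g (flip x \<eta>))"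
        unfolding F_def nuP Pf using True by (simp add: fx crate_def algebra_simps)
      also have "\<dots> \<le> P \<eta> * (-(1/4)*(\<rho>*(1-a)*(g (flip x \<eta>)-g \<eta>)^2 + (1-\<rho>)*a*(g \<eta>-g (flip x \<eta>))^2) + K*(\<rho>*(g \<eta>)^2+(1-\<rho>)*(g (flip x \<eta>))^2))"
        using c P0 by (rule mult_left_mono)
      also have "\<dots> = G \<eta> + G (flip x \<eta>)"
        unfolding G_def nuP Pf using True fg[OF \<eta>] fg[OF \<eta>'] by (simp add: fx crate_def field_simps power2_commute)
      finally show ?thesis .
    next
      case False
      have c: "\<rho>*(1-a)*(g \<eta>-g (flip x \<eta>))*g (flip x \<eta>) + (1-\<rho>)*a*(g (flip x \<eta>)-g \<eta>)*g \<eta> \<le>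
        -(1/4)*(\<rho>*(1-a)*(g \<eta>-g (flip x \<eta>))^2 + (1-\<rho>)*a*(g (flip x \<eta>)-g \<eta>)^2) + K*(\<rho>*(g (flip x \<eta>))^2+(1-\<rho>)*(g \<eta>)^2)"
        unfolding K_def using core[OF d(1) d(2)[folded \<rho>_def] d(3)[folded \<rho>_def] d(4) d(5)] .
      have "F \<eta> + F (flip x \<eta>) = P \<eta> * (\<rho>*(1-a)*(g \<eta>-g (flip x \<eta>))*g (flip x \<eta>) + (1-\<rho>)*a*(g (flip x \<eta>)-g \<eta>)*g \<eta>)"
        unfolding F_def nuP Pf using False by (simp add: fx crate_def algebra_simps)
      also have "\<dots> \<le> P \<eta> * (-(1/4)*(\<rho>*(1-a)*(g \<eta>-g (flip x \<eta>))^2 + (1-\<rho>)*a*(g (flip x \<eta>)-g \<eta>)^2) + K*(\<rho>*(g (flip x \<eta>))^2+(1-\<rho>)*(g \<eta>)^2))"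
        using c P0 by (rule mult_left_mono)
      also have "\<dots> = G \<eta> + G (flip x \<eta>)"
        unfolding G_def nuP Pf using False fg[OF \<eta>] fg[OF \<eta>'] by (simp add: fx crate_def field_simps power2_commute)
      finally show ?thesis .
    qed
  qed
  have reF: "(\<Sum>\<eta>\<in>Omega N. F (flip x \<eta>)) = (\<Sum>\<eta>\<in>Omega N. F \<eta>)"
    by (rule sum.reindex_bij_witness[of _ "flip x" "flip x"]) (auto simp: flip_Omega[OF x])
  have reG: "(\<Sum>\<eta>\<in>Omega N. G (flip x \<eta>)) = (\<Sum>\<eta>\<in>Omega N. G \<eta>)"
    by (rule sum.reindex_bij_witness[of _ "flip x" "flip x"]) (auto simp: flip_Omega[OF x])
  have "2 * (\<Sum>\<eta>\<in>Omega N. F \<eta>) = (\<Sum>\<eta>\<in>Omega N. F \<eta> + F (flip x \<eta>))"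
    by (simp add: sum.distrib reF)
  also have "\<dots> \<le> (\<Sum>\<eta>\<in>Omega N. G \<eta> + G (flip x \<eta>))" using pw by (rule sum_mono)
  also have "\<dots> = 2 * (\<Sum>\<eta>\<in>Omega N. G \<eta>)" by (simp add: sum.distrib reG)
  finally have FG: "(\<Sum>\<eta>\<in>Omega N. F \<eta>) \<le> (\<Sum>\<eta>\<in>Omega N. G \<eta>)" by simp
  have "(\<Sum>\<eta>\<in>Omega N. G \<eta>) = -(1/4) * Ix h N a x g + K * integ h N f"
  proof -
    have "(\<Sum>\<eta>\<in>Omega N. G \<eta>) = (\<Sum>\<eta>\<in>Omega N. -(1/4) * (nu h N \<eta> * (crate x \<eta> a * (g (flip x \<eta>) - g \<eta>)^2)) + K * (nu h N \<eta> * f \<eta>))"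
      unfolding G_def by (rule sum.cong) (auto simp: algebra_simps)
    also have "\<dots> = -(1/4) * (\<Sum>\<eta>\<in>Omega N. nu h N \<eta> * (crate x \<eta> a * (g (flip x \<eta>) - g \<eta>)^2)) + K * (\<Sum>\<eta>\<in>Omega N. nu h N \<eta> * f \<eta>)"
      by (simp only: sum.distrib sum_distrib_left)
    finally show ?thesis unfolding Ix_def integ_def .
  qed
  then show ?thesis using FG unfolding F_def integ_def K_def g_def \<rho>_def by (simp add: mult.assoc)
qed

lemma gen:
  fixes a \<delta> K :: real and w :: "int \<Rightarrow> real"
  assumes K: "K \<ge> 0" and w: "\<forall>x\<in>Lam N. w x \<ge> 0"
    and fnn: "\<forall>\<eta>\<in>Omega N. 0 \<le> f \<eta>" and f1: "integ h N f = 1"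
    and hr: "\<forall>y\<in>Lam N. 0 \<le> h (real_of_int y / real N) \<and> h (real_of_int y / real N) \<le> 1"
    and d: "\<delta> > 0" "\<forall>y\<in>Lam N. \<delta> \<le> h (real_of_int y / real N) \<and> h (real_of_int y / real N) \<le> 1 - \<delta>" "\<delta> \<le> a" "a \<le> 1 - \<delta>"
  shows "integ h N (\<lambda>\<eta>. (K * (\<Sum>x\<in>Lam N. w x * (crate x \<eta> a * (sqrt (f (flip x \<eta>)) - sqrt (f \<eta>))))) * sqrt (f \<eta>))
    \<le> -(1/4) * (K * (\<Sum>x\<in>Lam N. w x * Ix h N a x (\<lambda>\<zeta>. sqrt (f \<zeta>))))
      + 1/(2*\<delta>^2) * K * (\<Sum>x\<in>Lam N. w x * (h (real_of_int x / real N) - a)^2)"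
proof -
  define g where "g = (\<lambda>\<zeta>. sqrt (f \<zeta>))"
  define T where "T = (\<lambda>x \<eta>. crate x \<eta> a * (g (flip x \<eta>) - g \<eta>) * g \<eta>)"
  have "integ h N (\<lambda>\<eta>. (K * (\<Sum>x\<in>Lam N. w x * (crate x \<eta> a * (g (flip x \<eta>) - g \<eta>)))) * g \<eta>)
      = (\<Sum>\<eta>\<in>Omega N. \<Sum>x\<in>Lam N. K * (w x * (nu h N \<eta> * T x \<eta>)))"
    unfolding integ_def T_def
    by (rule sum.cong) (simp_all add: sum_distrib_left sum_distrib_right mult_ac)
  also have "\<dots> = (\<Sum>x\<in>Lam N. \<Sum>\<eta>\<in>Omega N. K * (w x * (nu h N \<eta> * T x \<eta>)))"
    by (rule sum.swap)
  also have "\<dots> = K * (\<Sum>x\<in>Lam N. w x * integ h N (T x))"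
    unfolding integ_def by (simp add: sum_distrib_left)
  also have "\<dots> \<le> K * (\<Sum>x\<in>Lam N. w x * (-(1/4) * Ix h N a x g + 1/(2*\<delta>^2)*(h (real_of_int x / real N) - a)^2 * integ h N f))"
  proof (intro mult_left_mono[OF _ K] sum_mono)
    fix x assume x: "x \<in> Lam N"
    show "w x * integ h N (T x) \<le> w x * (-(1/4) * Ix h N a x g + 1/(2*\<delta>^2)*(h (real_of_int x / real N) - a)^2 * integ h N f)"
      unfolding T_def g_def
      using site[OF x fnn hr d(1) _ _ d(3) d(4)] d(2) x w by (intro mult_left_mono) auto
  qed
  also have "\<dots> = -(1/4) * (K * (\<Sum>x\<in>Lam N. w x * Ix h N a x g))
      + 1/(2*\<delta>^2) * K * (\<Sum>x\<in>Lam N. w x * (h (real_of_int x / real N) - a)^2)"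
  proof -
    have "(\<Sum>x\<in>Lam N. w x * (-(1/4) * Ix h N a x g + 1/(2*\<delta>^2)*(h (real_of_int x / real N) - a)^2 * integ h N f))
       = (\<Sum>x\<in>Lam N. -(1/4) * (w x * Ix h N a x g) + 1/(2*\<delta>^2) * (w x * (h (real_of_int x / real N) - a)^2))"
      unfolding f1 by (rule sum.cong) (simp_all add: algebra_simps)
    also have "\<dots> = -(1/4) * (\<Sum>x\<in>Lam N. w x * Ix h N a x g) + 1/(2*\<delta>^2) * (\<Sum>x\<in>Lam N. w x * (h (real_of_int x / real N) - a)^2)"
      by (simp only: sum.distrib sum_distrib_left)
    finally have E: "(\<Sum>x\<in>Lam N. w x * (-(1/4) * Ix h N a x g + 1/(2*\<delta>^2)*(h (real_of_int x / real N) - a)^2 * integ h N f))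
      = -(1/4) * (\<Sum>x\<in>Lam N. w x * Ix h N a x g) + 1/(2*\<delta>^2) * (\<Sum>x\<in>Lam N. w x * (h (real_of_int x / real N) - a)^2)" .
    show ?thesis unfolding E by (simp add: algebra_simps)
  qed
  finally show ?thesis unfolding g_def .
qed

lemma L_left_eq:
  "L_left p \<kappa> \<theta> \<alpha> N g \<eta> = \<kappa> / (real N powr \<theta>) *
     (\<Sum>x\<in>Lam N. r_minus p N x * (crate x \<eta> \<alpha> * (g (flip x \<eta>) - g \<eta>)))"
  unfolding L_left_def
proof (intro arg_cong[where f="\<lambda>t. \<kappa> / (real N powr \<theta>) * t"] sum.cong refl)
  fix x assume "x \<in> Lam N"
  have "(\<Sum>\<^sub>\<infinity>y\<in>{..0}. p (x - y) * crate x \<eta> \<alpha> * (g (flip x \<eta>) - g \<eta>))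
      = (\<Sum>\<^sub>\<infinity>y\<in>{..0}. p (x - y) * (crate x \<eta> \<alpha> * (g (flip x \<eta>) - g \<eta>)))"
    by (simp add: mult.assoc)
  also have "\<dots> = (\<Sum>\<^sub>\<infinity>y\<in>{..0}. p (x - y)) * (crate x \<eta> \<alpha> * (g (flip x \<eta>) - g \<eta>))"
    by (rule infsum_cmult_left')
  also have "(\<Sum>\<^sub>\<infinity>y\<in>{..0}. p (x - y)) = r_minus p N x"
    unfolding r_minus_def
    by (rule infsum_reindex_bij_witness[of _ "\<lambda>z. x - z" "\<lambda>y. x - y"]) auto
  finally show "(\<Sum>\<^sub>\<infinity>y\<in>{..0}. p (x - y) * crate x \<eta> \<alpha> * (g (flip x \<eta>) - g \<eta>))
      = r_minus p N x * (crate x \<eta> \<alpha> * (g (flip x \<eta>) - g \<eta>))" .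
qed

lemma L_right_eq:
  "L_right p \<kappa> \<theta> \<beta> N g \<eta> = \<kappa> / (real N powr \<theta>) *
     (\<Sum>x\<in>Lam N. r_plus p N x * (crate x \<eta> \<beta> * (g (flip x \<eta>) - g \<eta>)))"
  unfolding L_right_def
proof (intro arg_cong[where f="\<lambda>t. \<kappa> / (real N powr \<theta>) * t"] sum.cong refl)
  fix x assume "x \<in> Lam N"
  have "(\<Sum>\<^sub>\<infinity>y\<in>{int N..}. p (x - y) * crate x \<eta> \<beta> * (g (flip x \<eta>) - g \<eta>))
      = (\<Sum>\<^sub>\<infinity>y\<in>{int N..}. p (x - y) * (crate x \<eta> \<beta> * (g (flip x \<eta>) - g \<eta>)))"
    by (simp add: mult.assoc)
  also have "\<dots> = (\<Sum>\<^sub>\<infinity>y\<in>{int N..}. p (x - y)) * (crate x \<eta> \<beta> * (g (flip x \<eta>) - g \<eta>))"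
    by (rule infsum_cmult_left')
  also have "(\<Sum>\<^sub>\<infinity>y\<in>{int N..}. p (x - y)) = r_plus p N x"
    unfolding r_plus_def
    by (rule infsum_reindex_bij_witness[of _ "\<lambda>z. x - z" "\<lambda>y. x - y"]) auto
  finally show "(\<Sum>\<^sub>\<infinity>y\<in>{int N..}. p (x - y) * crate x \<eta> \<beta> * (g (flip x \<eta>) - g \<eta>))
      = r_plus p N x * (crate x \<eta> \<beta> * (g (flip x \<eta>) - g \<eta>))" .
qed

theorem corollary5p4:
  fixes p :: "int \<Rightarrow> real" and \<alpha> \<beta> \<kappa> \<theta> :: real and h :: "real \<Rightarrow> real"
  assumes hp: "sym_trans_prob p"
    and h\<alpha>: "0 < \<alpha>" "\<alpha> < 1" and h\<beta>: "0 < \<beta>" "\<beta> < 1" and h\<kappa>: "0 < \<kappa>"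
    and hLip: "\<exists>L. L-lipschitz_on {0..1} h"
    and hrange: "\<forall>u\<in>{0..1}. 0 \<le> h u \<and> h u \<le> 1"
    and hbounds: "\<forall>u\<in>{0..1}. min \<alpha> \<beta> \<le> h u \<and> h u \<le> max \<alpha> \<beta>"
  shows "\<exists>C>0. \<forall>N::nat. \<forall>f. N \<ge> 1 \<longrightarrow> is_density h N f \<longrightarrow>
     integ h N (\<lambda>\<eta>. L_left p \<kappa> \<theta> \<alpha> N (\<lambda>\<zeta>. sqrt (f \<zeta>)) \<eta> * sqrt (f \<eta>))
       \<le> - (1/4) * D_left p \<kappa> \<theta> \<alpha> h N (\<lambda>\<zeta>. sqrt (f \<zeta>))
         + C * \<kappa> / (real N powr \<theta>) *
           (\<Sum>x\<in>Lam N. r_minus p N x * (h (real_of_int x / real N) - \<alpha>)^2)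
   \<and> integ h N (\<lambda>\<eta>. L_right p \<kappa> \<theta> \<beta> N (\<lambda>\<zeta>. sqrt (f \<zeta>)) \<eta> * sqrt (f \<eta>))
       \<le> - (1/4) * D_right p \<kappa> \<theta> \<beta> h N (\<lambda>\<zeta>. sqrt (f \<zeta>))
         + C * \<kappa> / (real N powr \<theta>) *
           (\<Sum>x\<in>Lam N. r_plus p N x * (h (real_of_int x / real N) - \<beta>)^2)"
proof -
  define \<delta> where "\<delta> = min (min \<alpha> (1-\<alpha>)) (min \<beta> (1-\<beta>))"
  have d0: "\<delta> > 0" unfolding \<delta>_def using h\<alpha> h\<beta> by simp
  have p0: "\<And>z. p z \<ge> 0" using hp unfolding sym_trans_prob_def by simp
  show ?thesis
  proof (intro exI[of _ "1/(2*\<delta>^2)"] conjI allI impI)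
    show "0 < 1/(2*\<delta>^2)" using d0 by simp
    fix N :: nat and f
    assume N: "1 \<le> N" and dens: "is_density h N f"
    have fnn: "\<forall>\<eta>\<in>Omega N. 0 \<le> f \<eta>" and f1: "integ h N f = 1"
      using dens unfolding is_density_def by auto
    have unit: "real_of_int y / real N \<in> {0..1}" if "y \<in> Lam N" for y
      using that N unfolding Lam_def by (auto simp: field_simps)
    have hr: "\<forall>y\<in>Lam N. 0 \<le> h (real_of_int y / real N) \<and> h (real_of_int y / real N) \<le> 1"
      using hrange unit by blast
    have hd: "\<forall>y\<in>Lam N. \<delta> \<le> h (real_of_int y / real N) \<and> h (real_of_int y / real N) \<le> 1 - \<delta>"
    proof
      fix y assume "y \<in> Lam N"
      then have "min \<alpha> \<beta> \<le> h (real_of_int y / real N) \<and> h (real_of_int y / real N) \<le> max \<alpha> \<beta>"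
        using hbounds unit by blast
      then show "\<delta> \<le> h (real_of_int y / real N) \<and> h (real_of_int y / real N) \<le> 1 - \<delta>"
        unfolding \<delta>_def by (auto simp: min_def max_def split: if_splits)
    qed
    have K: "\<kappa> / real N powr \<theta> \<ge> 0" using h\<kappa> by simp
    have wm: "\<forall>x\<in>Lam N. r_minus p N x \<ge> 0" unfolding r_minus_def using p0 by (simp add: infsum_nonneg)
    have wp: "\<forall>x\<in>Lam N. r_plus p N x \<ge> 0" unfolding r_plus_def using p0 by (simp add: infsum_nonneg)
    have a1: "\<delta> \<le> \<alpha>" "\<alpha> \<le> 1 - \<delta>" "\<delta> \<le> \<beta>" "\<beta> \<le> 1 - \<delta>" unfolding \<delta>_def by auto
    show "integ h N (\<lambda>\<eta>. L_left p \<kappa> \<theta> \<alpha> N (\<lambda>\<zeta>. sqrt (f \<zeta>)) \<eta> * sqrt (f \<eta>))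
       \<le> - (1/4) * D_left p \<kappa> \<theta> \<alpha> h N (\<lambda>\<zeta>. sqrt (f \<zeta>))
         + 1/(2*\<delta>^2) * \<kappa> / (real N powr \<theta>) *
           (\<Sum>x\<in>Lam N. r_minus p N x * (h (real_of_int x / real N) - \<alpha>)^2)"
      unfolding L_left_eq D_left_def
      using gen[OF K wm fnn f1 hr d0 hd a1(1) a1(2)] by (simp add: mult.assoc)
    show "integ h N (\<lambda>\<eta>. L_right p \<kappa> \<theta> \<beta> N (\<lambda>\<zeta>. sqrt (f \<zeta>)) \<eta> * sqrt (f \<eta>))
       \<le> - (1/4) * D_right p \<kappa> \<theta> \<beta> h N (\<lambda>\<zeta>. sqrt (f \<zeta>))
         + 1/(2*\<delta>^2) * \<kappa> / (real N powr \<theta>) *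
           (\<Sum>x\<in>Lam N. r_plus p N x * (h (real_of_int x / real N) - \<beta>)^2)"
      unfolding L_right_eq D_right_def
      using gen[OF K wp fnn f1 hr d0 hd a1(3) a1(4)] by (simp add: mult.assoc)
  qed
qed
end
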